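(* Let $H$ be a connected finite simple graph with $|V(H)|\geqslant 4$ that contains no chorded cycle and no Hamiltonian path. Let $P_1=u_1u_2\cdots u_p$ be a longest path in $H$, with $p\geqslant 3$, and let $P_2=v_1v_2\cdots v_q$ be a longest path in $H-V(P_1)$, with $q\geqslant 1$. Suppose $d_{P_1}(v_1)\leqslant d_{P_1}(v_q)$. Then at least one of the following holds: (1) $q\leqslant 2$ and $V(H)=V(P_1)\cup V(P_2)$; (2) $q\geqslant 3$ and $d_H(v_1)=1$; (3) there exists a vertex $w\in V(H)\setminus (V(P_1)\cup\{v_1\})$ such that $d_H(w)\leqslant 2$, $u_1w\notin E(H)$, $u_pw\notin E(H)$, and $w$ is not a cut-vertex of $H$.
   Context: A chord of a cycle $C$ is an edge of the graph not in $E(C)$ with both ends on $C$; a chorded cycle is a cycle with at least one chord. A path is written as its vertex sequence; "longest" means having the maximum number of vertices. $H-V(P_1)$ is the subgraph induced by $V(H)\setminus V(P_1)$. For a subgraph $K$ and a vertex $u$, $d_K(u)=|N(u)\cap V(K)|$ is the number of neighbours of $u$ lying in $V(K)$ (in particular $d_H(u)$ is the degree of $u$ in $H$). *)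

theory Defs
  imports Main
begin

definition simple_graph :: "'a set \<Rightarrow> ('a \<Rightarrow> 'a \<Rightarrow> bool) \<Rightarrow> bool" where
  "simple_graph V E \<longleftrightarrow> finite V \<and> (\<forall>x y. E x y \<longrightarrow> E y x) \<and> (\<forall>x. \<not> E x x)
     \<and> (\<forall>x y. E x y \<longrightarrow> x \<in> V \<and> y \<in> V)"

definition is_path :: "'a set \<Rightarrow> ('a \<Rightarrow> 'a \<Rightarrow> bool) \<Rightarrow> 'a list \<Rightarrow> bool" where
  "is_path S E xs \<longleftrightarrow> xs \<noteq> [] \<and> set xs \<subseteq> S \<and> distinct xs
     \<and> (\<forall>i. i + 1 < length xs \<longrightarrow> E (xs ! i) (xs ! (i + 1)))"

definition longest_path :: "'a set \<Rightarrow> ('a \<Rightarrow> 'a \<Rightarrow> bool) \<Rightarrow> 'a list \<Rightarrow> bool" where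
  "longest_path S E xs \<longleftrightarrow> is_path S E xs \<and> (\<forall>ys. is_path S E ys \<longrightarrow> length ys \<le> length xs)"

definition hamiltonian_path :: "'a set \<Rightarrow> ('a \<Rightarrow> 'a \<Rightarrow> bool) \<Rightarrow> 'a list \<Rightarrow> bool" where
  "hamiltonian_path V E xs \<longleftrightarrow> is_path V E xs \<and> set xs = V"

definition reachable_in :: "'a set \<Rightarrow> ('a \<Rightarrow> 'a \<Rightarrow> bool) \<Rightarrow> 'a \<Rightarrow> 'a \<Rightarrow> bool" where
  "reachable_in S E x y \<longleftrightarrow> (\<exists>xs. is_path S E xs \<and> hd xs = x \<and> last xs = y)"

definition connected_graph :: "'a set \<Rightarrow> ('a \<Rightarrow> 'a \<Rightarrow> bool) \<Rightarrow> bool" where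
  "connected_graph V E \<longleftrightarrow> V \<noteq> {} \<and> (\<forall>x\<in>V. \<forall>y\<in>V. reachable_in V E x y)"

definition is_cycle :: "'a set \<Rightarrow> ('a \<Rightarrow> 'a \<Rightarrow> bool) \<Rightarrow> 'a list \<Rightarrow> bool" where
  "is_cycle V E cs \<longleftrightarrow> length cs \<ge> 3 \<and> is_path V E cs \<and> E (last cs) (hd cs)"

definition cycle_edges :: "'a list \<Rightarrow> 'a set set" where
  "cycle_edges cs = {{cs ! i, cs ! (i + 1)} | i. i + 1 < length cs} \<union> {{last cs, hd cs}}"

definition is_chord :: "('a \<Rightarrow> 'a \<Rightarrow> bool) \<Rightarrow> 'a list \<Rightarrow> 'a \<Rightarrow> 'a \<Rightarrow> bool" where
  "is_chord E cs x y \<longleftrightarrow> E x y \<and> x \<in> set cs \<and> y \<in> set cs \<and> {x, y} \<notin> cycle_edges cs"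

definition has_chorded_cycle :: "'a set \<Rightarrow> ('a \<Rightarrow> 'a \<Rightarrow> bool) \<Rightarrow> bool" where
  "has_chorded_cycle V E \<longleftrightarrow> (\<exists>cs x y. is_cycle V E cs \<and> is_chord E cs x y)"

definition deg_in :: "('a \<Rightarrow> 'a \<Rightarrow> bool) \<Rightarrow> 'a set \<Rightarrow> 'a \<Rightarrow> nat" where
  "deg_in E K u = card {x \<in> K. E u x}"

text \<open>Cut vertex: removing w increases the number of components, i.e. some two
vertices other than w connected in H are no longer connected in H - w.\<close>
definition cut_vertex :: "'a set \<Rightarrow> ('a \<Rightarrow> 'a \<Rightarrow> bool) \<Rightarrow> 'a \<Rightarrow> bool" where
  "cut_vertex V E w \<longleftrightarrow> w \<in> V \<and> (\<exists>x\<in>V - {w}. \<exists>y\<in>V - {w}.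
      reachable_in V E x y \<and> \<not> reachable_in (V - {w}) E x y)"

end

theory Submission
  imports Defs
begin



lemma is_path_succ: "is_path S E xs \<longleftrightarrow> xs \<noteq> [] \<and> set xs \<subseteq> S \<and> distinct xs \<and> successively E xs"
  unfolding is_path_def successively_conv_nth by auto

lemma is_path_single[simp]: "is_path S E [x] \<longleftrightarrow> x \<in> S"
  by (simp add: is_path_succ)

lemma is_path_Cons: "is_path S E (x # xs) \<longleftrightarrow> x \<in> S \<and> x \<notin> set xs \<and> (xs = [] \<or> (is_path S E xs \<and> E x (hd xs)))"
  by (auto simp: is_path_succ successively_Cons)

lemma is_path_append: "xs \<noteq> [] \<Longrightarrow> ys \<noteq> [] \<Longrightarrow>
   is_path S E (xs @ ys) \<longleftrightarrow> is_path S E xs \<and> is_path S E ys \<and> set xs \<inter> set ys = {} \<and> E (last xs) (hd ys)"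
  by (auto simp: is_path_succ successively_append_iff)

lemma is_path_rev: "(\<forall>x y. E x y \<longrightarrow> E y x) \<Longrightarrow> is_path S E (rev xs) \<longleftrightarrow> is_path S E xs"
  by (auto simp: is_path_succ intro: successively_mono)

lemma is_path_mono: "is_path S E xs \<Longrightarrow> S \<subseteq> T \<Longrightarrow> is_path T E xs"
  by (auto simp: is_path_succ)

lemma is_path_take: "is_path S E xs \<Longrightarrow> n > 0 \<Longrightarrow> is_path S E (take n xs)"
proof -
  assume a: "is_path S E xs" "n > 0"
  have "xs = take n xs @ drop n xs" by simp
  then have "successively E (take n xs)" using a successively_append_iff[of E "take n xs" "drop n xs"]
    by (auto simp: is_path_succ)
  then show ?thesis using a by (auto simp: is_path_succ dest: in_set_takeD)
qed

lemma is_path_drop: "is_path S E xs \<Longrightarrow> n < length xs \<Longrightarrow> is_path S E (drop n xs)"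
proof -
  assume a: "is_path S E xs" "n < length xs"
  have "xs = take n xs @ drop n xs" by simp
  then have "successively E (drop n xs)" using a successively_append_iff[of E "take n xs" "drop n xs"]
    by (auto simp: is_path_succ)
  then show ?thesis using a by (auto simp: is_path_succ dest: in_set_dropD)
qed

lemma is_path_butlast: "is_path S E xs \<Longrightarrow> length xs \<ge> 2 \<Longrightarrow> is_path S E (butlast xs)"
  using is_path_take[of S E xs "length xs - 1"] by (simp add: butlast_conv_take)

lemma is_path_tl: "is_path S E xs \<Longrightarrow> length xs \<ge> 2 \<Longrightarrow> is_path S E (tl xs)"
  using is_path_drop[of S E xs 1] by (simp add: drop_Suc)

definition seg :: "'a list \<Rightarrow> nat \<Rightarrow> nat \<Rightarrow> 'a list" where
  "seg L a b = (if a \<le> b then take (b - a + 1) (drop a L) else rev (take (a - b + 1) (drop b L)))"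

lemma set_take_drop: "b < length L \<Longrightarrow> a \<le> b \<Longrightarrow> set (take (b - a + 1) (drop a L)) = {L ! t | t. a \<le> t \<and> t \<le> b}"
proof -
  assume "b < length L" "a \<le> b"
  then show ?thesis
    apply (auto simp: in_set_conv_nth)
     apply (rule_tac x="a + i" in exI) apply auto
    apply (rule_tac x="t - a" in exI) apply auto
    done
qed

lemma seg_props:
  assumes "is_path S E L" "a < length L" "b < length L" "\<forall>x y. E x y \<longrightarrow> E y x"
  shows "is_path S E (seg L a b)" "hd (seg L a b) = L ! a" "last (seg L a b) = L ! b"
    "set (seg L a b) = {L ! t | t. min a b \<le> t \<and> t \<le> max a b}"
proof -
  have p1: "is_path S E (take (b - a + 1) (drop a L))" if "a \<le> b"
    using assms that by (intro is_path_take is_path_drop) auto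
  have p2: "is_path S E (take (a - b + 1) (drop b L))" if "b < a"
    using assms that by (intro is_path_take is_path_drop) auto
  show "is_path S E (seg L a b)" unfolding seg_def using p1 p2 is_path_rev[OF assms(4)] by auto
  have lt: "last (take (y - x + 1) (drop x L)) = L ! y" "hd (take (y - x + 1) (drop x L)) = L ! x"
    if "x \<le> y" "y < length L" for x y
  proof -
    have ne: "take (y - x + 1) (drop x L) \<noteq> []" using that by auto
    have len: "length (take (y - x + 1) (drop x L)) = y - x + 1" using that by auto
    show "last (take (y - x + 1) (drop x L)) = L ! y"
      using that ne by (simp add: last_conv_nth len)
    show "hd (take (y - x + 1) (drop x L)) = L ! x"
      using that ne by (simp add: hd_conv_nth)
  qed
  show "hd (seg L a b) = L ! a" unfolding seg_def using assms lt[of a b] lt[of b a]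
    by (auto simp: hd_rev)
  show "last (seg L a b) = L ! b" unfolding seg_def using assms lt[of a b] lt[of b a]
    by (auto simp: last_rev)
  show "set (seg L a b) = {L ! t | t. min a b \<le> t \<and> t \<le> max a b}"
    unfolding seg_def using assms set_take_drop[of b L a] set_take_drop[of a L b] by auto
qed




locale G =
  fixes V :: "'a set" and E :: "'a \<Rightarrow> 'a \<Rightarrow> bool"
  assumes sg: "simple_graph V E" and nc: "\<not> has_chorded_cycle V E"
begin

lemma sym: "E x y \<Longrightarrow> E y x" using sg unfolding simple_graph_def by blast
lemma irr: "\<not> E x x" using sg unfolding simple_graph_def by blast
lemma inV: "E x y \<Longrightarrow> x \<in> V" "E x y \<Longrightarrow> y \<in> V" using sg unfolding simple_graph_def by blast+
lemma finV: "finite V" using sg unfolding simple_graph_def by blast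
lemma symA: "\<forall>x y. E x y \<longrightarrow> E y x" using sym by blast

lemma chord3:
  assumes L: "is_path V E L" and x: "x \<in> V" "x \<notin> set L" and abc: "a < b" "b < c" "c < length L"
    and e: "E x (L!a)" "E x (L!b)" "E x (L!c)"
  shows False
proof -
  define T where "T = seg L a c"
  have T: "is_path V E T" "hd T = L ! a" "last T = L ! c" "set T = {L ! t | t. a \<le> t \<and> t \<le> c}"
    using seg_props[OF L, of a c] abc symA unfolding T_def by auto
  have Tdef: "T = take (c - a + 1) (drop a L)" using abc unfolding T_def seg_def by auto
  have lenT: "length T = c - a + 1" using abc Tdef by auto
  define cs where "cs = x # T"
  have dL: "distinct L" using L by (simp add: is_path_def)
  have Tsub: "set T \<subseteq> set L" using Tdef by (auto dest: in_set_takeD in_set_dropD)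
  have Tne: "T \<noteq> []" using lenT by auto
  have cyc: "is_cycle V E cs"
    unfolding is_cycle_def cs_def
  proof (intro conjI)
    show "3 \<le> length (x # T)" using lenT abc by auto
    show "is_path V E (x # T)" using x T e Tsub Tne by (auto simp: is_path_Cons)
    show "E (last (x # T)) (hd (x # T))" using Tne T e sym by auto
  qed
  have bin: "L ! b \<in> set T" using T abc by auto
  have Lb: "L ! b \<noteq> x" using x abc by auto
  have notin: "{x, L ! b} \<notin> cycle_edges cs"
  proof
    assume "{x, L ! b} \<in> cycle_edges cs"
    then consider i where "{x, L ! b} = {cs ! i, cs ! (i + 1)}" "i + 1 < length cs"
      | "{x, L ! b} = {last cs, hd cs}"
      unfolding cycle_edges_def by blast
    then show False
    proof cases
      case (1 i)
      show False
      proof (cases i)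
        case 0
        then have "cs ! (i+1) = L ! a" using T Tne unfolding cs_def by (simp add: hd_conv_nth)
        then have "L ! b = L ! a" using 1 0 Lb unfolding cs_def by (auto simp: doubleton_eq_iff)
        then show False using dL abc by (simp add: nth_eq_iff_index_eq)
      next
        case (Suc k)
        then have "cs ! i \<in> set T" "cs ! (i+1) \<in> set T" using 1 unfolding cs_def by auto
        then have "x \<in> set T" using 1 by (auto simp: doubleton_eq_iff)
        then show False using x Tsub by auto
      qed
    next
      case 2
      then have "L ! b = L ! c" using T Tne Lb unfolding cs_def by (auto simp: doubleton_eq_iff)
      then show False using dL abc by (simp add: nth_eq_iff_index_eq)
    qed
  qed
  have "is_chord E cs x (L ! b)" unfolding is_chord_def using e bin notin cs_def by auto
  then show False using nc cyc unfolding has_chorded_cycle_def by blast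
qed

lemma chord3':
  assumes L: "is_path V E L" and x: "x \<in> V" "x \<notin> set L" and y: "y1 \<in> set L" "y2 \<in> set L" "y3 \<in> set L"
    and d: "y1 \<noteq> y2" "y1 \<noteq> y3" "y2 \<noteq> y3"
    and e: "E x y1" "E x y2" "E x y3"
  shows False
proof -
  obtain i1 i2 i3 where i: "i1 < length L" "i2 < length L" "i3 < length L" "L!i1 = y1" "L!i2 = y2" "L!i3 = y3"
    using y by (auto simp: in_set_conv_nth)
  have ne: "i1 \<noteq> i2" "i1 \<noteq> i3" "i2 \<noteq> i3" using i d by auto
  have gen: "False" if "a < b" "b < c" "c < length L" "{a,b,c} = {i1,i2,i3}" for a b c
  proof -
    have "E x (L!a)" "E x (L!b)" "E x (L!c)" using that i e by auto
    then show False using chord3[OF L x that(1-3)] by blast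
  qed
  show False
    using ne i(1-3) gen[of i1 i2 i3] gen[of i1 i3 i2] gen[of i2 i1 i3] gen[of i2 i3 i1] gen[of i3 i1 i2] gen[of i3 i2 i1]
    by (metis insert_commute linorder_neqE_nat)
qed

lemma card_ge3: assumes "finite A" "card A \<ge> 3" shows "\<exists>a b c. a \<in> A \<and> b \<in> A \<and> c \<in> A \<and> a \<noteq> b \<and> a \<noteq> c \<and> b \<noteq> c"
proof -
  obtain a where a: "a \<in> A" using assms by fastforce
  have "card (A - {a}) \<ge> 2" using assms a by auto
  then have "A - {a} \<noteq> {}" by (metis card.empty not_numeral_le_zero)
  then obtain b where b: "b \<in> A - {a}" by blast
  have "card (A - {a} - {b}) \<ge> 1" using assms a b by (auto simp: card_Diff_singleton)
  then have "A - {a} - {b} \<noteq> {}" by (metis card.empty not_one_le_zero)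
  then obtain c where c: "c \<in> A - {a} - {b}" by blast
  show ?thesis using a b c by blast
qed

lemma chord_card:
  assumes L: "is_path V E L" and x: "x \<in> V" "x \<notin> set L"
  shows "card {y \<in> set L. E x y} \<le> 2"
proof (rule ccontr)
  assume "\<not> ?thesis"
  then obtain a b c where "a \<in> {y \<in> set L. E x y}" "b \<in> {y \<in> set L. E x y}" "c \<in> {y \<in> set L. E x y}"
    "a \<noteq> b" "a \<noteq> c" "b \<noteq> c" using card_ge3[of "{y \<in> set L. E x y}"] by force
  then show False using chord3'[OF L x, of a b c] by auto
qed

end



definition RS :: "'a set \<Rightarrow> ('a \<Rightarrow> 'a \<Rightarrow> bool) \<Rightarrow> 'a \<Rightarrow> 'a \<Rightarrow> bool" where
  "RS S E a b \<longleftrightarrow> E a b \<and> a \<in> S \<and> b \<in> S"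

lemma path_reach: "is_path S E xs \<Longrightarrow> y \<in> set xs \<Longrightarrow> (RS S E)\<^sup>*\<^sup>* (hd xs) y"
proof (induction xs)
  case Nil then show ?case by simp
next
  case (Cons a xs)
  show ?case
  proof (cases "y = a")
    case True then show ?thesis by simp
  next
    case False
    then have xs: "xs \<noteq> []" "is_path S E xs" "E a (hd xs)" "a \<in> S" "y \<in> set xs"
      using Cons.prems by (auto simp: is_path_Cons)
    then have "(RS S E)\<^sup>*\<^sup>* (hd xs) y" using Cons.IH by blast
    moreover have "RS S E a (hd xs)" using xs unfolding RS_def by (auto simp: is_path_def)
    ultimately show ?thesis by (simp add: converse_rtranclp_into_rtranclp)
  qed
qed

lemma reach_path: "(RS S E)\<^sup>*\<^sup>* x y \<Longrightarrow> x \<in> S \<Longrightarrow> reachable_in S E x y"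
proof (induction rule: rtranclp_induct)
  case base then show ?case unfolding reachable_in_def by (auto intro!: exI[of _ "[x]"])
next
  case (step y z)
  then obtain xs where xs: "is_path S E xs" "hd xs = x" "last xs = y" unfolding reachable_in_def by blast
  have zS: "z \<in> S" "E y z" using step unfolding RS_def by auto
  show ?case
  proof (cases "z \<in> set xs")
    case True
    then obtain k where k: "k < length xs" "xs ! k = z" by (auto simp: in_set_conv_nth)
    define ys where "ys = take (Suc k) xs"
    have "is_path S E ys" unfolding ys_def using xs by (intro is_path_take) auto
    moreover have "hd ys = x" using xs k unfolding ys_def by (cases xs) auto
    moreover have "last ys = z" using k unfolding ys_def by (simp add: take_Suc_conv_app_nth)
    ultimately show ?thesis unfolding reachable_in_def by blast
  next
    case False
    have ne: "xs \<noteq> []" using xs by (simp add: is_path_def)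
    have "is_path S E (xs @ [z])" using xs zS False ne by (subst is_path_append) auto
    moreover have "hd (xs @ [z]) = x" using xs ne by simp
    ultimately show ?thesis unfolding reachable_in_def by (intro exI[of _ "xs @ [z]"]) auto
  qed
qed

lemma reachable_iff: "reachable_in S E x y \<longleftrightarrow> x \<in> S \<and> (RS S E)\<^sup>*\<^sup>* x y"
proof
  assume "reachable_in S E x y"
  then obtain xs where xs: "is_path S E xs" "hd xs = x" "last xs = y" unfolding reachable_in_def by blast
  then have ne: "xs \<noteq> []" by (simp add: is_path_def)
  then have "last xs \<in> set xs" by simp
  then have r: "(RS S E)\<^sup>*\<^sup>* (hd xs) (last xs)" by (rule path_reach[OF xs(1)])
  have "hd xs \<in> set xs" using ne by simp
  then have "hd xs \<in> S" using xs(1) unfolding is_path_def by blast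
  then show "x \<in> S \<and> (RS S E)\<^sup>*\<^sup>* x y" using r xs(2,3) by simp
next
  assume a: "x \<in> S \<and> (RS S E)\<^sup>*\<^sup>* x y"
  show "reachable_in S E x y" using reach_path[of S E x y] a by simp
qed

lemma RS_sym: "(RS S E)\<^sup>*\<^sup>* x y \<Longrightarrow> (\<forall>x y. E x y \<longrightarrow> E y x) \<Longrightarrow> (RS S E)\<^sup>*\<^sup>* y x"
proof (induction rule: rtranclp_induct)
  case base then show ?case by simp
next
  case (step y z)
  then have "RS S E z y" unfolding RS_def by auto
  then show ?case using step by (simp add: converse_rtranclp_into_rtranclp)
qed

lemma RS_mono: "(RS S E)\<^sup>*\<^sup>* x y \<Longrightarrow> S \<subseteq> T \<Longrightarrow> (RS T E)\<^sup>*\<^sup>* x y"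
proof -
  assume a: "(RS S E)\<^sup>*\<^sup>* x y" "S \<subseteq> T"
  have "RS S E \<le> RS T E" using a(2) by (auto simp: RS_def)
  then show ?thesis using a(1) by (metis rtranclp_mono predicate2D)
qed

lemma ex_longest: assumes "finite S" "x \<in> S" shows "\<exists>P. longest_path S E P"
proof -
  have "\<exists>P. is_path S E P \<and> (\<forall>ys. is_path S E ys \<longrightarrow> length ys \<le> length P)"
  proof (rule ex_has_greatest_nat[of "is_path S E" "[x]" length "card S + 1"])
    show "is_path S E [x]" using assms by simp
    show "\<forall>y. is_path S E y \<longrightarrow> length y < card S + 1"
    proof (intro allI impI)
      fix y assume "is_path S E y"
      then have "length y = card (set y)" "set y \<subseteq> S" by (auto simp: is_path_def distinct_card)
      then have "card (set y) \<le> card S" using card_mono[OF assms(1)] by blast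
      then show "length y < card S + 1" using \<open>length y = card (set y)\<close> by linarith
    qed
  qed
  then show ?thesis unfolding longest_path_def by blast
qed

lemma longest_hd_closed: "longest_path S E P \<Longrightarrow> y \<in> S \<Longrightarrow> E y (hd P) \<Longrightarrow> y \<in> set P"
proof (rule ccontr)
  assume a: "longest_path S E P" "y \<in> S" "E y (hd P)" "y \<notin> set P"
  then have "is_path S E (y # P)" by (auto simp: longest_path_def is_path_Cons)
  then show False using a by (auto simp: longest_path_def)
qed

lemma longest_last_closed: "longest_path S E P \<Longrightarrow> y \<in> S \<Longrightarrow> E (last P) y \<Longrightarrow> y \<in> set P"
proof (rule ccontr)
  assume a: "longest_path S E P" "y \<in> S" "E (last P) y" "y \<notin> set P"
  then have ne: "P \<noteq> []" by (auto simp: longest_path_def is_path_def)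
  then have "is_path S E (P @ [y])" using a by (subst is_path_append) (auto simp: longest_path_def)
  then show False using a by (auto simp: longest_path_def)
qed

context G begin

lemma noncut:
  assumes con: "connected_graph V E" and R: "is_path V E R" "hd R = w" and N: "\<forall>y. E w y \<longrightarrow> y \<in> set R"
  shows "\<not> cut_vertex V E w"
proof
  assume "cut_vertex V E w"
  then obtain x y where xy: "x \<in> V - {w}" "y \<in> V - {w}" "\<not> reachable_in (V - {w}) E x y"
    unfolding cut_vertex_def by blast
  have Rne: "R \<noteq> []" using R by (simp add: is_path_def)
  then have R': "R = w # tl R" using R by (cases R) auto
  have wV: "w \<in> V" using R Rne R' by (auto simp: is_path_def)
  have dR: "distinct R" using R by (simp add: is_path_def)
  have wt: "w \<notin> set (tl R)" using dR R' by (metis distinct.simps(2))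
  have "set (tl R) \<subseteq> set R" by (cases R) auto
  then have tlR: "set (tl R) \<subseteq> V - {w}" using R(1) wt by (auto simp: is_path_def)
  have close: "\<exists>t \<in> set (tl R). (RS (V - {w}) E)\<^sup>*\<^sup>* z t" if z: "z \<in> V - {w}" for z
  proof -
    have "reachable_in V E z w" using con z wV unfolding connected_graph_def by blast
    then obtain xs where xs: "is_path V E xs" "hd xs = z" "last xs = w" unfolding reachable_in_def by blast
    have ne: "xs \<noteq> []" using xs by (simp add: is_path_def)
    have len: "length xs \<ge> 2"
    proof (rule ccontr)
      assume "\<not> length xs \<ge> 2"
      then have "length (tl xs) = 0" by simp
      then have "tl xs = []" by blast
      then have "hd xs = last xs" using ne by (cases xs) auto
      then show False using xs z by auto
    qed
    define ys where "ys = butlast xs"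
    have xs_eq: "xs = ys @ [w]" unfolding ys_def using xs(3) ne append_butlast_last_id[of xs] by simp
    have yne: "ys \<noteq> []" using len xs_eq by auto
    have yp: "is_path V E ys" using is_path_butlast[OF xs(1) len] ys_def by simp
    have wny: "w \<notin> set ys" using xs(1) xs_eq by (auto simp: is_path_def)
    have yp': "is_path (V - {w}) E ys" using yp wny by (auto simp: is_path_def)
    have "E (last ys) w" using xs(1) xs_eq yne by (auto simp: is_path_append)
    then have t: "last ys \<in> set R" "last ys \<noteq> w" using N sym wny yne by auto
    then have "last ys \<in> set (tl R)" using R' by (metis set_ConsD)
    moreover have "hd ys = z" using xs xs_eq yne by simp
    ultimately show ?thesis using path_reach[OF yp', of "last ys"] yne by auto
  qed
  obtain t1 where t1: "t1 \<in> set (tl R)" "(RS (V - {w}) E)\<^sup>*\<^sup>* x t1" using close xy by blast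
  obtain t2 where t2: "t2 \<in> set (tl R)" "(RS (V - {w}) E)\<^sup>*\<^sup>* y t2" using close xy by blast
  have tp: "is_path (V - {w}) E (tl R)"
  proof -
    have "tl R \<noteq> []" using t1 by auto
    then have "is_path V E (tl R)" using R(1) R' by (metis is_path_Cons)
    then show ?thesis using tlR by (auto simp: is_path_def)
  qed
  have h1: "(RS (V - {w}) E)\<^sup>*\<^sup>* (hd (tl R)) t1" and h2: "(RS (V - {w}) E)\<^sup>*\<^sup>* (hd (tl R)) t2"
    using path_reach[OF tp] t1 t2 by auto
  have h3: "(RS (V - {w}) E)\<^sup>*\<^sup>* t1 (hd (tl R))" using RS_sym[OF h1 symA] .
  have h4: "(RS (V - {w}) E)\<^sup>*\<^sup>* t2 y" using RS_sym[OF t2(2) symA] .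
  have "(RS (V - {w}) E)\<^sup>*\<^sup>* x y"
    using rtranclp_trans[OF rtranclp_trans[OF rtranclp_trans[OF t1(2) h3] h2] h4] .
  then show False using xy reachable_iff by metis
qed

end



locale H = G +
  fixes P1 :: "'a list"
  assumes lp: "longest_path V E P1"
begin

abbreviation "S \<equiv> V - set P1"
abbreviation "p \<equiv> length P1"
definition good :: "'a \<Rightarrow> bool" where
  "good w \<longleftrightarrow> (\<exists>R. is_path V E R \<and> hd R = w \<and> (\<forall>y. E w y \<longrightarrow> y \<in> set R))"
definition NB :: "'a \<Rightarrow> 'a set" where "NB x = {y \<in> set P1. E x y}"

lemma P1p: "is_path V E P1" using lp by (simp add: longest_path_def)
lemma dP1: "distinct P1" using P1p by (simp add: is_path_def)

lemma nb_card: "x \<in> S \<Longrightarrow> card (NB x) \<le> 2"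
  unfolding NB_def using chord_card[OF P1p] by auto

lemma nb_fin: "finite (NB x)" unfolding NB_def by auto

lemma pathS: "is_path S E Z \<Longrightarrow> is_path V E Z" by (auto intro: is_path_mono)

lemma nbr_cases: "E x y \<Longrightarrow> y \<in> S \<or> y \<in> set P1" using inV by auto

lemma side_gen:
  assumes A: "is_path V E A" "set A \<subseteq> set P1" "last A = P1 ! i" and i: "i < p"
    and Z: "is_path S E Z" "length Z \<ge> 2" "E (hd Z) (P1 ! i)"
    and y: "y1 \<in> set A" "y2 \<in> set A" "y1 \<noteq> y2" "E (last Z) y1" "E (last Z) y2"
  shows False
proof -
  define B where "B = butlast Z"
  have Zne: "Z \<noteq> []" using Z by auto
  have Zeq: "Z = B @ [last Z]" unfolding B_def using Zne by simp
  have Bne: "B \<noteq> []" using Z(2) Zeq by (metis One_nat_def Suc_1 append.simps(1) le_antisym length_Cons list.size(3) not_less_eq_eq zero_le)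
  have Bp: "is_path S E B" unfolding B_def using is_path_butlast[OF Z(1,2)] .
  have hdB: "hd B = hd Z" using Zeq Bne by (metis hd_append2)
  have Ane: "A \<noteq> []" using A by (simp add: is_path_def)
  have BS: "set B \<subseteq> S" using Bp by (simp add: is_path_def)
  have L: "is_path V E (A @ B)"
    using Ane Bne A BS pathS[OF Bp] hdB Z(3) sym by (subst is_path_append) auto
  have "last Z \<in> set Z" using Zne by simp
  then have lZS: "last Z \<in> S" using Z(1) unfolding is_path_def by blast
  have lZB: "last Z \<notin> set B" using Z(1) Zeq by (metis distinct_append is_path_def disjoint_iff list.set_intros(1))
  have nin: "last Z \<notin> set (A @ B)" using lZS lZB A by auto
  have e3: "E (last Z) (last B)" using Z(1) Zeq Bne by (metis is_path_append list.sel(1) not_Cons_self2 sym)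
  have lB1: "last B \<in> set B" using Bne by simp
  then have lB: "last B \<in> set B" "last B \<notin> set A" using BS A(2) by auto
  show False using chord3'[OF L _ nin, of y1 y2 "last B"] y lB lZS e3 by auto
qed

lemma side_le:
  assumes i: "i < p" and Z: "is_path S E Z" "length Z \<ge> 2" "E (hd Z) (P1 ! i)"
    and c: "c1 \<le> i" "c2 \<le> i" "c1 \<noteq> c2" "E (last Z) (P1 ! c1)" "E (last Z) (P1 ! c2)"
  shows False
proof -
  let ?A = "take (Suc i) P1"
  have A: "is_path V E ?A" using is_path_take[OF P1p] by auto
  have "set ?A \<subseteq> set P1" by (auto dest: in_set_takeD)
  moreover have "last ?A = P1 ! i" using i by (simp add: take_Suc_conv_app_nth)
  moreover have "P1 ! c1 \<in> set ?A" "P1 ! c2 \<in> set ?A"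
    using c i nth_mem[of c1 ?A] nth_mem[of c2 ?A] by auto
  moreover have "P1 ! c1 \<noteq> P1 ! c2" using c i dP1 by (simp add: nth_eq_iff_index_eq)
  ultimately show False using side_gen[OF A _ _ i Z, of "P1 ! c1" "P1 ! c2"] c by auto
qed

lemma side_ge:
  assumes i: "i < p" and Z: "is_path S E Z" "length Z \<ge> 2" "E (hd Z) (P1 ! i)"
    and c: "i \<le> c1" "i \<le> c2" "c1 < p" "c2 < p" "c1 \<noteq> c2" "E (last Z) (P1 ! c1)" "E (last Z) (P1 ! c2)"
  shows False
proof -
  let ?A = "rev (drop i P1)"
  have A: "is_path V E ?A" using is_path_drop[OF P1p i] is_path_rev[OF symA] by auto
  have "set ?A \<subseteq> set P1" by (auto dest: in_set_dropD)
  moreover have "last ?A = P1 ! i" using i by (simp add: last_rev hd_drop_conv_nth)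
  moreover have "P1 ! c1 \<in> set ?A" "P1 ! c2 \<in> set ?A" using c i
    by (auto simp: in_set_conv_nth) (metis add_diff_inverse_nat diff_less_mono not_less nth_drop length_drop)+
  moreover have "P1 ! c1 \<noteq> P1 ! c2" using c i dP1 by (simp add: nth_eq_iff_index_eq)
  ultimately show False using side_gen[OF A _ _ i Z, of "P1 ! c1" "P1 ! c2"] c by auto
qed

end



context H begin

lemma idx: "y \<in> set P1 \<Longrightarrow> \<exists>i<p. P1 ! i = y" by (auto simp: in_set_conv_nth)

lemma seg_in: "a < p \<Longrightarrow> b < p \<Longrightarrow> set (seg P1 a b) \<subseteq> set P1"
  using seg_props(4)[OF P1p, of a b] symA by auto

lemma seg_path: "a < p \<Longrightarrow> b < p \<Longrightarrow> is_path V E (seg P1 a b)"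
  using seg_props(1)[OF P1p, of a b] symA by auto

lemma seg_hd: "a < p \<Longrightarrow> b < p \<Longrightarrow> P1 ! a \<in> set (seg P1 a b)"
  using seg_props(2)[OF P1p, of a b] seg_path[of a b] symA
  by (metis hd_in_set is_path_def)

lemma seg_last: "a < p \<Longrightarrow> b < p \<Longrightarrow> P1 ! b \<in> set (seg P1 a b)"
  using seg_props(3)[OF P1p, of a b] seg_path[of a b] symA
  by (metis last_in_set is_path_def)

lemma seg_mid: "a < p \<Longrightarrow> b < p \<Longrightarrow> min a b \<le> t \<Longrightarrow> t \<le> max a b \<Longrightarrow> P1 ! t \<in> set (seg P1 a b)"
  using seg_props(4)[OF P1p, of a b] symA by auto

lemma E0:
  assumes Z: "is_path S E Z" and cl: "\<forall>y\<in>S. E (last Z) y \<longrightarrow> y \<in> set Z" and nb: "NB (last Z) = {}"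
  shows "good (last Z)"
  unfolding good_def
proof (intro exI conjI)
  show "is_path V E (rev Z)" using pathS[OF Z] is_path_rev[OF symA] by auto
  show "hd (rev Z) = last Z" by (simp add: hd_rev)
  show "\<forall>y. E (last Z) y \<longrightarrow> y \<in> set (rev Z)"
    using cl nb nbr_cases unfolding NB_def by auto
qed

lemma E1:
  assumes Z: "is_path S E Z" and cl: "\<forall>y\<in>S. E (last Z) y \<longrightarrow> y \<in> set Z"
    and ic: "i < p" "c < p" "E (hd Z) (P1 ! i)" and nb: "NB (last Z) \<subseteq> set (seg P1 i c)"
  shows "good (last Z)"
  unfolding good_def
proof (intro exI conjI)
  let ?R = "rev Z @ seg P1 i c"
  have Zne: "Z \<noteq> []" using Z by (simp add: is_path_def)
  have sne: "seg P1 i c \<noteq> []" using seg_path[OF ic(1,2)] by (simp add: is_path_def)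
  have ZS: "set Z \<subseteq> S" using Z by (simp add: is_path_def)
  show "is_path V E ?R"
    using Zne sne pathS[OF Z] is_path_rev[OF symA] seg_path[OF ic(1,2)] seg_in[OF ic(1,2)] ZS
      seg_props(2)[OF P1p ic(1,2) symA] ic(3)
    by (subst is_path_append) (auto simp: last_rev)
  show "hd ?R = last Z" using Zne by (simp add: hd_rev)
  show "\<forall>y. E (last Z) y \<longrightarrow> y \<in> set ?R"
    using cl nb nbr_cases unfolding NB_def by auto
qed

lemma card2_idx:
  assumes "card (NB x) = 2"
  shows "\<exists>a b. a < p \<and> b < p \<and> a \<noteq> b \<and> NB x = {P1 ! a, P1 ! b}"
proof -
  obtain y1 y2 where y: "NB x = {y1, y2}" "y1 \<noteq> y2" using assms card_2_iff by metis
  then have "y1 \<in> set P1" "y2 \<in> set P1" unfolding NB_def by auto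
  then obtain a b where "a < p" "b < p" "P1 ! a = y1" "P1 ! b = y2" using idx by metis
  then show ?thesis using y by auto
qed

lemma card1_idx:
  assumes "card (NB x) = 1"
  shows "\<exists>a. a < p \<and> NB x = {P1 ! a}"
proof -
  obtain y1 where y: "NB x = {y1}" using assms card_1_singletonE by metis
  then have "y1 \<in> set P1" unfolding NB_def by auto
  then show ?thesis using y idx by metis
qed

lemma C22:
  assumes Z: "is_path S E Z" "length Z \<ge> 2" and c: "card (NB (hd Z)) = 2" "card (NB (last Z)) = 2"
  shows False
proof -
  obtain i i' where ii: "i < p" "i' < p" "i \<noteq> i'" "NB (hd Z) = {P1 ! i, P1 ! i'}" using card2_idx[OF c(1)] by blast
  obtain j0 l0 where jl0: "j0 < p" "l0 < p" "j0 \<noteq> l0" "NB (last Z) = {P1 ! j0, P1 ! l0}" using card2_idx[OF c(2)] by blast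
  obtain j l where jl: "j < l" "l < p" "NB (last Z) = {P1 ! j, P1 ! l}"
    using jl0 by (metis insert_commute linorder_neqE_nat)
  have ei: "E (hd Z) (P1 ! i)" "E (hd Z) (P1 ! i')" using ii unfolding NB_def by auto
  have ej: "E (last Z) (P1 ! j)" "E (last Z) (P1 ! l)" using jl unfolding NB_def by auto
  have ji: "j < k" if "k < p" "E (hd Z) (P1 ! k)" for k
  proof (rule ccontr)
    assume "\<not> j < k"
    then have "k \<le> j" "k \<le> l" using jl by auto
    then show False using side_ge[OF that(1) Z that(2), of j l] jl ej by auto
  qed
  have "j < i" "j < i'" using ji ii ei by auto
  have Zne: "Z \<noteq> []" using Z by (simp add: is_path_def)
  have ZR: "is_path S E (rev Z)" "length (rev Z) \<ge> 2" "E (hd (rev Z)) (P1 ! j)"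
    using Z is_path_rev[OF symA] ej Zne by (auto simp: hd_rev)
  show False using side_ge[OF _ ZR, of i i'] jl ii ei \<open>j < i\<close> \<open>j < i'\<close> Zne by (auto simp: last_rev)
qed

lemma COMP:
  assumes Z: "is_path S E Z" and clH: "\<forall>y\<in>S. E (hd Z) y \<longrightarrow> y \<in> set Z"
    and clL: "\<forall>y\<in>S. E (last Z) y \<longrightarrow> y \<in> set Z"
  shows "good (hd Z) \<or> good (last Z)"
proof -
  have Zne: "Z \<noteq> []" using Z by (simp add: is_path_def)
  have ZR: "is_path S E (rev Z)" using Z is_path_rev[OF symA] by auto
  have clR: "\<forall>y\<in>S. E (last (rev Z)) y \<longrightarrow> y \<in> set (rev Z)" using clH Zne by (simp add: last_rev)
  have "hd Z \<in> set Z" "last Z \<in> set Z" using Zne by auto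
  then have hS: "hd Z \<in> S" "last Z \<in> S" using Z unfolding is_path_def by blast+
  show ?thesis
  proof (cases "NB (hd Z) = {}")
    case True
    then have "good (last (rev Z))" using E0[OF ZR clR] Zne by (simp add: last_rev)
    then show ?thesis using Zne by (simp add: last_rev)
  next
    case F1: False
    show ?thesis
    proof (cases "NB (last Z) = {}")
      case True then show ?thesis using E0[OF Z clL] by simp
    next
      case F2: False
      obtain i where i: "i < p" "P1 ! i \<in> NB (hd Z)" using F1 idx unfolding NB_def by blast
      obtain j where j: "j < p" "P1 ! j \<in> NB (last Z)" using F2 idx unfolding NB_def by blast
      have ci: "card (NB (hd Z)) = 1 \<or> card (NB (hd Z)) = 2" using nb_card[OF hS(1)] F1 nb_fin
        by (metis One_nat_def Suc_1 card_0_eq le_Suc_eq le_zero_eq)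
      have cj: "card (NB (last Z)) = 1 \<or> card (NB (last Z)) = 2" using nb_card[OF hS(2)] F2 nb_fin
        by (metis One_nat_def Suc_1 card_0_eq le_Suc_eq le_zero_eq)
      show ?thesis
      proof (cases "card (NB (last Z)) = 1")
        case True
        then obtain a where a: "a < p" "NB (last Z) = {P1 ! a}" using card1_idx by blast
        have "NB (last Z) \<subseteq> set (seg P1 i a)" using a seg_last[OF i(1) a(1)] by auto
        moreover have "E (hd Z) (P1 ! i)" using i unfolding NB_def by auto
        ultimately show ?thesis using E1[OF Z clL i(1) a(1)] by auto
      next
        case cjn: False
        show ?thesis
        proof (cases "card (NB (hd Z)) = 1")
          case True
          then obtain a where a: "a < p" "NB (hd Z) = {P1 ! a}" using card1_idx by blast
          have "NB (last (rev Z)) \<subseteq> set (seg P1 j a)" using a seg_last[OF j(1) a(1)] Zne by (auto simp: last_rev)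
          moreover have "E (hd (rev Z)) (P1 ! j)" using j Zne unfolding NB_def by (auto simp: hd_rev)
          ultimately have "good (last (rev Z))" using E1[OF ZR clR j(1) a(1)] by auto
          then show ?thesis using Zne by (simp add: last_rev)
        next
          case False
          then have c2: "card (NB (hd Z)) = 2" "card (NB (last Z)) = 2" using ci cj cjn by auto
          show ?thesis
          proof (cases "length Z \<ge> 2")
            case True then show ?thesis using C22[OF Z True c2] by blast
          next
            case False
            then have hl: "hd Z = last Z" using Zne by (cases Z) (auto simp: Suc_le_eq)
            obtain a b where ab: "a < p" "b < p" "NB (last Z) = {P1 ! a, P1 ! b}" using card2_idx[OF c2(2)] by blast
            have "NB (last Z) \<subseteq> set (seg P1 a b)" using ab seg_hd[of a b] seg_last[of a b] by auto
            moreover have "E (hd Z) (P1 ! a)" using ab hl unfolding NB_def by auto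
            ultimately show ?thesis using E1[OF Z clL ab(1) ab(2)] by auto
          qed
        qed
      qed
    qed
  qed
qed

end



context H begin

lemma closed_longest:
  assumes "longest_path S E Z"
  shows "\<forall>y\<in>S. E (hd Z) y \<longrightarrow> y \<in> set Z" "\<forall>y\<in>S. E (last Z) y \<longrightarrow> y \<in> set Z"
  using longest_hd_closed[OF assms] longest_last_closed[OF assms] sym by blast+

lemma longest_same_len:
  assumes "longest_path S E Z" "is_path S E Z'" "length Z' = length Z"
  shows "longest_path S E Z'"
  using assms unfolding longest_path_def by auto

lemma COMP_longest:
  assumes "longest_path S E Z"
  shows "good (hd Z) \<or> good (last Z)"
  using COMP[OF _ closed_longest[OF assms]] assms by (simp add: longest_path_def)

lemma rot_case:
  assumes P2: "longest_path S E P2" and q: "length P2 \<ge> 3" and a: "NB (hd P2) = {}"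
    and dg: "deg_in E V (hd P2) \<noteq> 1"
  shows "\<exists>w\<in>S - {hd P2}. good w"
proof -
  let ?q = "length P2"
  have Pp: "is_path S E P2" using P2 by (simp add: longest_path_def)
  have dP: "distinct P2" using Pp by (simp add: is_path_def)
  have PS: "set P2 \<subseteq> S" using Pp by (simp add: is_path_def)
  have h0: "hd P2 = P2 ! 0" using q by (cases P2) auto
  have e01: "E (P2 ! 0) (P2 ! 1)" using Pp q unfolding is_path_def by auto
  have fin: "finite {x \<in> V. E (hd P2) x}" using finV by auto
  have in1: "P2 ! 1 \<in> {x \<in> V. E (hd P2) x}" using e01 h0 inV by auto
  obtain y where y: "y \<in> V" "E (hd P2) y" "y \<noteq> P2 ! 1"
  proof -
    have "{x \<in> V. E (hd P2) x} \<noteq> {P2 ! 1}" using dg unfolding deg_in_def by auto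
    then show ?thesis using in1 that by blast
  qed
  have "y \<notin> set P1" using a y unfolding NB_def by auto
  then have "y \<in> set P2" using closed_longest(1)[OF P2] y by auto
  then obtain k where k: "k < ?q" "P2 ! k = y" by (auto simp: in_set_conv_nth)
  have "k \<noteq> 0"
  proof
    assume "k = 0" then have "E (P2 ! 0) (P2 ! 0)" using k y h0 by simp
    then show False using irr by blast
  qed
  moreover have "k \<noteq> 1" using k y by auto
  ultimately have k2: "k \<ge> 2" by auto
  define Z where "Z = rev (take k P2) @ drop k P2"
  have tne: "take k P2 \<noteq> []" "drop k P2 \<noteq> []" using k k2 by auto
  have Zp: "is_path S E Z" unfolding Z_def
  proof (subst is_path_append)
    show "rev (take k P2) \<noteq> []" "drop k P2 \<noteq> []" using tne by auto
    show "is_path S E (rev (take k P2)) \<and> is_path S E (drop k P2) \<and>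
      set (rev (take k P2)) \<inter> set (drop k P2) = {} \<and> E (last (rev (take k P2))) (hd (drop k P2))"
      using is_path_take[OF Pp, of k] is_path_drop[OF Pp k(1)] is_path_rev[OF symA] k2 k
        set_take_disj_set_drop_if_distinct[OF dP] y h0
      by (auto simp: last_rev hd_drop_conv_nth hd_conv_nth)
  qed
  have Zl: "length Z = ?q" unfolding Z_def using k by simp
  have ZL: "longest_path S E Z" using longest_same_len[OF P2 Zp Zl] .
  have hdZ: "hd Z = P2 ! (k - 1)" unfolding Z_def using tne k
    by (simp add: hd_rev last_conv_nth)
  have "last Z = last P2" unfolding Z_def using tne k by (simp add: last_drop)
  moreover have "P2 \<noteq> []" using q by auto
  ultimately have lZ: "last Z = P2 ! (?q - 1)" by (simp add: last_conv_nth)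
  have Pne: "P2 \<noteq> []" using q by auto
  have n1: "P2 ! (k - 1) \<noteq> hd P2" unfolding h0 using Pne dP k k2 nth_eq_iff_index_eq[OF dP, of "k - 1" 0] by auto
  have n2: "P2 ! (?q - 1) \<noteq> hd P2" unfolding h0 using Pne dP q nth_eq_iff_index_eq[OF dP, of "?q - 1" 0] by auto
  have "P2 ! (k - 1) \<in> set P2" "P2 ! (?q - 1) \<in> set P2" using k q by auto
  then have s1: "P2 ! (k - 1) \<in> S" "P2 ! (?q - 1) \<in> S" using PS by blast+
  show ?thesis using COMP_longest[OF ZL] hdZ lZ n1 n2 s1 by auto
qed

end



context H begin

lemma H2case:
  assumes P2: "longest_path S E P2" and q: "length P2 \<ge> 3" and i: "i < p" and ei: "E (hd P2) (P1 ! i)"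
    and b2: "card (NB (last P2)) = 2"
  shows "\<exists>w\<in>S - {hd P2}. good w"
proof -
  let ?q = "length P2"
  have Pp: "is_path S E P2" using P2 by (simp add: longest_path_def)
  have PV: "is_path V E P2" using pathS[OF Pp] .
  have dP: "distinct P2" using Pp by (simp add: is_path_def)
  have PS: "set P2 \<subseteq> S" using Pp by (simp add: is_path_def)
  have Pne: "P2 \<noteq> []" using q by auto
  define v1 v2 v3 vq where "v1 = P2 ! 0" "v2 = P2 ! 1" "v3 = P2 ! 2" "vq = P2 ! (?q - 1)"
  have h0: "hd P2 = v1" unfolding v1_v2_v3_vq_def using Pne by (cases P2) auto
  have hl: "last P2 = vq" unfolding v1_v2_v3_vq_def using Pne by (simp add: last_conv_nth)
  have PSk: "P2 ! k \<in> S" if "k < ?q" for k using PS that nth_mem[OF that] by blast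
  have vS: "v1 \<in> S" "v2 \<in> S" "v3 \<in> S" "vq \<in> S" unfolding v1_v2_v3_vq_def using PSk[of 0] PSk[of 1] PSk[of 2] PSk[of "?q - 1"] q Pne by auto
  have neq: "P2 ! a \<noteq> P2 ! b" if "a < ?q" "b < ?q" "a \<noteq> b" for a b
    using nth_eq_iff_index_eq[OF dP that(1,2)] that(3) by blast
  have vne: "v1 \<noteq> v2" "v1 \<noteq> v3" "v2 \<noteq> v3" "v2 \<noteq> vq" "v1 \<noteq> vq"
    unfolding v1_v2_v3_vq_def using neq[of 0 1] neq[of 0 2] neq[of 1 2] neq[of 1 "?q - 1"] neq[of 0 "?q - 1"] q Pne by auto
  have eP: "E (P2 ! k) (P2 ! Suc k)" if "Suc k < ?q" for k using Pp that unfolding is_path_def by auto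
  have e12: "E v1 v2" "E v2 v3" unfolding v1_v2_v3_vq_def using eP[of 0] eP[of 1] q by (auto simp: numeral_2_eq_2)
  obtain j0 l0 where jl0: "j0 < p" "l0 < p" "j0 \<noteq> l0" "NB (last P2) = {P1 ! j0, P1 ! l0}"
    using card2_idx[OF b2] by blast
  obtain j l where jl: "j < l" "l < p" "NB vq = {P1 ! j, P1 ! l}"
    using jl0 hl by (metis insert_commute linorder_neqE_nat)
  have ej: "E vq (P1 ! j)" "E vq (P1 ! l)" using jl unfolding NB_def by auto
  have Z2: "is_path S E P2" "length P2 \<ge> 2" "E (hd P2) (P1 ! i)" using Pp q ei by auto
  have "\<not> (j \<le> i \<and> l \<le> i)" using side_le[OF i Z2, of j l] jl ej hl by auto
  moreover have "\<not> (i \<le> j \<and> i \<le> l)" using side_ge[OF i Z2, of j l] jl ej hl by auto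
  ultimately have jil: "j < i" "i < l" using jl by auto
  have ei': "E v1 (P1 ! i)" using ei h0 by simp
  define D where "D = seg P2 2 (?q - 1)"
  have D: "is_path S E D" "hd D = v3" "last D = vq" "set D = {P2 ! t | t. 2 \<le> t \<and> t \<le> ?q - 1}"
    using seg_props[OF Pp, of 2 "?q - 1"] q symA unfolding D_def v1_v2_v3_vq_def by auto
  have Dne: "D \<noteq> []" using D by (simp add: is_path_def)
  have DS: "set D \<subseteq> S" using D by (simp add: is_path_def)
  have v12D: "v1 \<notin> set D" "v2 \<notin> set D"
  proof -
    have "P2 ! 0 \<noteq> P2 ! t" "P2 ! 1 \<noteq> P2 ! t" if "2 \<le> t" "t \<le> ?q - 1" for t
      using neq[of 0 t] neq[of 1 t] that q Pne by auto
    then show "v1 \<notin> set D" "v2 \<notin> set D" unfolding D(4) v1_v2_v3_vq_def by blast+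
  qed
  have genL: "\<forall>y\<in>set (D @ seg P1 t i @ [v1]). E v2 y \<longrightarrow> y = v1 \<or> y = v3"
    if t: "t < p" "E vq (P1 ! t)" for t
  proof -
    have sp: "is_path V E (seg P1 t i)" "set (seg P1 t i) \<subseteq> set P1" "hd (seg P1 t i) = P1 ! t"
      "last (seg P1 t i) = P1 ! i"
      using seg_path[OF t(1) i] seg_in[OF t(1) i] seg_props(2,3)[OF P1p t(1) i symA] by auto
    have sne: "seg P1 t i \<noteq> []" using sp by (simp add: is_path_def)
    have L1: "is_path V E (D @ seg P1 t i)"
      using Dne sne pathS[OF D(1)] sp DS D(3) t(2) by (subst is_path_append) auto
    have L: "is_path V E (D @ seg P1 t i @ [v1])"
    proof -
      have "is_path V E ((D @ seg P1 t i) @ [v1])"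
        using Dne sne L1 vS(1) v12D sp ei' sym DS by (subst is_path_append) auto
      then show ?thesis by simp
    qed
    have nin: "v2 \<notin> set (D @ seg P1 t i @ [v1])" using v12D vS sp vne by auto
    have in13: "v1 \<in> set (D @ seg P1 t i @ [v1])" "v3 \<in> set (D @ seg P1 t i @ [v1])"
      using D(2) Dne hd_in_set[OF Dne] by auto
    show ?thesis
    proof (intro ballI impI)
      fix y assume y: "y \<in> set (D @ seg P1 t i @ [v1])" "E v2 y"
      show "y = v1 \<or> y = v3"
      proof (rule ccontr)
        assume "\<not> ?thesis"
        then show False using chord3'[OF L _ nin in13(1) in13(2) y(1)] vS vne y(2) e12 sym by auto
      qed
    qed
  qed
  define B where "B = seg P2 1 (?q - 2)"
  have B: "is_path S E B" "hd B = v2" "last B = P2 ! (?q - 2)" "set B = {P2 ! t | t. 1 \<le> t \<and> t \<le> ?q - 2}"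
    using seg_props[OF Pp, of 1 "?q - 2"] q symA unfolding B_def v1_v2_v3_vq_def by auto
  have Bne: "B \<noteq> []" using B by (simp add: is_path_def)
  have BS: "set B \<subseteq> S" using B by (simp add: is_path_def)
  have vqB: "vq \<notin> set B"
  proof -
    have "P2 ! (?q - 1) \<noteq> P2 ! t" if "1 \<le> t" "t \<le> ?q - 2" for t
      using neq[of "?q - 1" t] that q Pne by auto
    then show ?thesis unfolding B(4) v1_v2_v3_vq_def by blast
  qed
  have eq2: "E (P2 ! (?q - 2)) vq"
  proof -
    have "Suc (?q - 2) = ?q - 1" "Suc (?q - 2) < ?q" using q by auto
    then show ?thesis using eP[of "?q - 2"] unfolding v1_v2_v3_vq_def by simp
  qed
  have genM: False if c: "c < p" "E v2 (P1 ! c)" and t: "t < p"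
    and jin: "P1 ! j \<in> set (seg P1 c t)" and lin: "P1 ! l \<in> set (seg P1 c t)" for c t
  proof -
    have sp: "is_path V E (seg P1 c t)" "set (seg P1 c t) \<subseteq> set P1" "hd (seg P1 c t) = P1 ! c"
      using seg_path[OF c(1) t] seg_in[OF c(1) t] seg_props(2)[OF P1p c(1) t symA] by auto
    have sne: "seg P1 c t \<noteq> []" using sp by (simp add: is_path_def)
    have M: "is_path V E (rev B @ seg P1 c t)"
      using Bne sne pathS[OF B(1)] is_path_rev[OF symA] sp BS B(2) c(2)
      by (subst is_path_append) (auto simp: last_rev)
    have nin: "vq \<notin> set (rev B @ seg P1 c t)" using vqB vS sp by auto
    have inq: "P2 ! (?q - 2) \<in> set (rev B @ seg P1 c t)" using B(3) Bne last_in_set[OF Bne] by auto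
    have d: "P1 ! j \<noteq> P1 ! l" using jl dP1 nth_eq_iff_index_eq[OF dP1, of j l] by auto
    have "?q - 2 < ?q" using q by auto
    then have "P2 ! (?q - 2) \<in> S" using PSk by blast
    moreover have "P1 ! j \<in> set P1" "P1 ! l \<in> set P1" using jl by auto
    ultimately have d2: "P2 ! (?q - 2) \<noteq> P1 ! j" "P2 ! (?q - 2) \<noteq> P1 ! l" by auto
    show False using chord3'[OF M _ nin inq, of "P1 ! j" "P1 ! l"] jin lin d d2 ej eq2 sym vS by auto
  qed
  have F1: "\<not> E v2 (P1 ! c)" if c: "c < p" for c
  proof
    assume e: "E v2 (P1 ! c)"
    consider "c < j" | "j \<le> c \<and> c \<le> i" | "i \<le> c \<and> c \<le> l" | "l < c" by linarith
    then show False
    proof cases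
      case 1
      then show False using genM[OF c e jl(2)] seg_mid[OF c jl(2), of j] seg_last[OF c jl(2)] jl by auto
    next
      case 2
      have "P1 ! c \<in> set (seg P1 j i)" using seg_mid[of j i c] 2 jl jil i by auto
      then have "P1 ! c = v1 \<or> P1 ! c = v3" using genL[of j] jl jil ej e by auto
      then show False using vS c by auto
    next
      case 3
      have "P1 ! c \<in> set (seg P1 l i)" using seg_mid[of l i c] 3 jl jil i by auto
      then have "P1 ! c = v1 \<or> P1 ! c = v3" using genL[of l] jl jil ej e by auto
      then show False using vS c by auto
    next
      case 4
      have jp: "j < p" using jl by auto
      then show False using genM[OF c e jp] seg_mid[OF c jp, of l] seg_last[OF c jp] jl 4 by auto
    qed
  qed
  have F2: "y = v1 \<or> y = v3" if y: "y \<in> set P2" "E v2 y" for y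
  proof -
    obtain k where k: "k < ?q" "P2 ! k = y" using y by (auto simp: in_set_conv_nth)
    consider "k = 0" | "k = 1" | "k \<ge> 2" by linarith
    then show ?thesis
    proof cases
      case 1 then show ?thesis using k unfolding v1_v2_v3_vq_def by auto
    next
      case 2 then show ?thesis using k y irr unfolding v1_v2_v3_vq_def by auto
    next
      case 3
      then have "y \<in> set D" using D(4) k by auto
      then show ?thesis using genL[of j] jl ej y by auto
    qed
  qed
  show ?thesis
  proof (cases "\<forall>y\<in>S. E v2 y \<longrightarrow> y \<in> set P2")
    case True
    have Nv2: "y = v1 \<or> y = v3" if "E v2 y" for y
    proof -
      have "y \<in> V" using that inV by blast
      moreover have "y \<notin> set P1" using that F1 idx by blast
      ultimately show ?thesis using True F2 that by auto
    qed
    let ?R = "[v2, v1] @ seg P1 i l @ rev D"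
    have sp: "is_path V E (seg P1 i l)" "set (seg P1 i l) \<subseteq> set P1" "hd (seg P1 i l) = P1 ! i"
      "last (seg P1 i l) = P1 ! l"
      using seg_path[OF i jl(2)] seg_in[OF i jl(2)] seg_props(2,3)[OF P1p i jl(2) symA] by auto
    have sne: "seg P1 i l \<noteq> []" using sp by (simp add: is_path_def)
    have R1: "is_path V E (seg P1 i l @ rev D)"
      using Dne sne pathS[OF D(1)] is_path_rev[OF symA] sp DS D(3) ej sym
      by (subst is_path_append) (auto simp: hd_rev)
    have R2: "is_path V E [v2, v1]" using vS vne e12 sym by (auto simp: is_path_Cons)
    have R: "is_path V E ?R"
      using R1 R2 sne vS v12D sp ei' by (subst is_path_append) auto
    have "good v2" unfolding good_def
    proof (intro exI conjI)
      show "is_path V E ?R" using R .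
      show "hd ?R = v2" by simp
      show "\<forall>y. E v2 y \<longrightarrow> y \<in> set ?R" using Nv2 D(2) hd_in_set[OF Dne] by auto
    qed
    then show ?thesis using vS vne h0 by auto
  next
    case False
    then obtain z where z: "z \<in> S" "E v2 z" "z \<notin> set P2" by blast
    have tlp: "is_path S E (tl P2)" using is_path_tl[OF Pp] q by auto
    have tne: "tl P2 \<noteq> []" using q by (cases P2) auto
    have htl: "hd (tl P2) = v2" unfolding v1_v2_v3_vq_def using hd_conv_nth[OF tne] nth_tl[of 0 P2] tne q by auto
    have "set (tl P2) \<subseteq> set P2" by (cases P2) auto
    then have Zp: "is_path S E (z # tl P2)" using z tlp htl tne sym by (auto simp: is_path_Cons)
    have "length (z # tl P2) = ?q" using Pne by (cases P2) auto
    then have ZL: "longest_path S E (z # tl P2)" using longest_same_len[OF P2 Zp] by simp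
    have "last (z # tl P2) = vq" using tne hl Pne by (cases P2) auto
    then have "good z \<or> good vq" using COMP_longest[OF ZL] by simp
    moreover have "z \<in> S - {hd P2}" using z hd_in_set[OF Pne] by auto
    moreover have "vq \<in> S - {hd P2}" using vS vne h0 by auto
    ultimately show ?thesis by blast
  qed
qed

end



lemma cross: "xs \<noteq> [] \<Longrightarrow> hd xs \<notin> T \<Longrightarrow> last xs \<in> T \<Longrightarrow> \<exists>k. Suc k < length xs \<and> xs ! k \<notin> T \<and> xs ! Suc k \<in> T"
proof (induction xs)
  case Nil then show ?case by simp
next
  case (Cons a xs)
  show ?case
  proof (cases "xs = []")
    case True then show ?thesis using Cons by simp
  next
    case False
    show ?thesis
    proof (cases "hd xs \<in> T")
      case True then show ?thesis using Cons False by (intro exI[of _ 0]) (auto simp: hd_conv_nth)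
    next
      case nT: False
      then obtain k where "Suc k < length xs" "xs ! k \<notin> T" "xs ! Suc k \<in> T" using Cons False by auto
      then show ?thesis by (intro exI[of _ "Suc k"]) auto
    qed
  qed
qed

lemma set_le2: "xs \<noteq> [] \<Longrightarrow> length xs \<le> 2 \<Longrightarrow> y \<in> set xs \<Longrightarrow> y = hd xs \<or> y = last xs"
  by (cases xs; cases "tl xs") auto

context H begin

lemma good_concl:
  assumes con: "connected_graph V E" and w: "w \<in> S" and g: "good w"
  shows "deg_in E V w \<le> 2 \<and> \<not> E (hd P1) w \<and> \<not> E (last P1) w \<and> \<not> cut_vertex V E w"
proof -
  obtain R where R: "is_path V E R" "hd R = w" "\<forall>y. E w y \<longrightarrow> y \<in> set R" using g unfolding good_def by blast
  have Rne: "R \<noteq> []" using R by (simp add: is_path_def)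
  then have R': "R = w # tl R" using R(2) by (cases R) auto
  have wt: "w \<notin> set (tl R)" using R(1) R' by (metis distinct.simps(2) is_path_def)
  have sub: "{x \<in> V. E w x} \<subseteq> {y \<in> set (tl R). E w y}"
  proof
    fix x assume x: "x \<in> {x \<in> V. E w x}"
    then have "x \<in> set R" "x \<noteq> w" using R irr by auto
    then show "x \<in> {y \<in> set (tl R). E w y}" using x R' by (metis (mono_tags, lifting) mem_Collect_eq set_ConsD)
  qed
  have "card {y \<in> set (tl R). E w y} \<le> 2"
  proof (cases "tl R = []")
    case True then show ?thesis by simp
  next
    case False
    then have "is_path V E (tl R)" using R(1) R' by (metis is_path_Cons)
    then show ?thesis using chord_card[of "tl R" w] w wt by auto
  qed
  then have d: "deg_in E V w \<le> 2" unfolding deg_in_def using card_mono[OF _ sub] by fastforce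
  have h: "\<not> E (hd P1) w" using longest_hd_closed[OF lp, of w] w sym by auto
  have l: "\<not> E (last P1) w" using longest_last_closed[OF lp, of w] w by auto
  show ?thesis using d h l noncut[OF con R] by auto
qed

lemma case_ge3:
  assumes P2: "longest_path S E P2" and q: "length P2 \<ge> 3"
    and deg: "card (NB (hd P2)) \<le> card (NB (last P2))" and dg: "deg_in E V (hd P2) \<noteq> 1"
  shows "\<exists>w\<in>S - {hd P2}. good w"
proof -
  have Pp: "is_path S E P2" using P2 by (simp add: longest_path_def)
  have dP: "distinct P2" using Pp by (simp add: is_path_def)
  have Pne: "P2 \<noteq> []" using q by auto
  have "hd P2 \<in> set P2" "last P2 \<in> set P2" using Pne by auto
  then have hS: "hd P2 \<in> S" "last P2 \<in> S" using Pp unfolding is_path_def by blast+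
  have hl: "last P2 \<noteq> hd P2"
  proof -
    have "hd P2 = P2 ! 0" "last P2 = P2 ! (length P2 - 1)" using Pne by (auto simp: hd_conv_nth last_conv_nth)
    then show ?thesis using nth_eq_iff_index_eq[OF dP, of 0 "length P2 - 1"] q Pne by auto
  qed
  have lastS: "last P2 \<in> S - {hd P2}" using hS hl by auto
  show ?thesis
  proof (cases "NB (last P2) = {}")
    case True
    then show ?thesis using E0[OF Pp closed_longest(2)[OF P2]] lastS by blast
  next
    case F2: False
    show ?thesis
    proof (cases "NB (hd P2) = {}")
      case True then show ?thesis using rot_case[OF P2 q True dg] by blast
    next
      case False
      obtain i where i: "i < p" "P1 ! i \<in> NB (hd P2)" using False idx unfolding NB_def by blast
      have ei: "E (hd P2) (P1 ! i)" using i unfolding NB_def by auto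
      have cj: "card (NB (last P2)) = 1 \<or> card (NB (last P2)) = 2" using nb_card[OF hS(2)] F2 nb_fin
        by (metis One_nat_def Suc_1 card_0_eq le_Suc_eq le_zero_eq)
      show ?thesis
      proof (cases "card (NB (last P2)) = 1")
        case True
        then obtain a where a: "a < p" "NB (last P2) = {P1 ! a}" using card1_idx by blast
        have "NB (last P2) \<subseteq> set (seg P1 i a)" using a seg_last[OF i(1) a(1)] by auto
        then show ?thesis using E1[OF Pp closed_longest(2)[OF P2] i(1) a(1) ei] lastS by blast
      next
        case False
        then show ?thesis using H2case[OF P2 q i(1) ei] cj by auto
      qed
    qed
  qed
qed

lemma case_le2:
  assumes P2: "longest_path S E P2" and q: "length P2 \<le> 2" and ne: "S \<noteq> set P2"
  shows "\<exists>w\<in>S - {hd P2}. good w"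
proof -
  have Pp: "is_path S E P2" using P2 by (simp add: longest_path_def)
  have Pne: "P2 \<noteq> []" using Pp by (simp add: is_path_def)
  have PS: "set P2 \<subseteq> S" using Pp by (simp add: is_path_def)
  obtain x where x: "x \<in> S" "x \<notin> set P2" using ne PS by blast
  show ?thesis
  proof (cases "reachable_in S E x (hd P2)")
    case True
    then obtain xs where xs: "is_path S E xs" "hd xs = x" "last xs = hd P2" unfolding reachable_in_def by blast
    have xne: "xs \<noteq> []" using xs by (simp add: is_path_def)
    obtain k where k: "Suc k < length xs" "xs ! k \<notin> set P2" "xs ! Suc k \<in> set P2"
      using cross[OF xne, of "set P2"] xs x hd_in_set[OF Pne] by auto
    have "xs ! k \<in> set xs" using k(1) by auto
    then have yS: "xs ! k \<in> S" using xs(1) unfolding is_path_def by blast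
    have e: "E (xs ! k) (xs ! Suc k)" using xs(1) k(1) unfolding is_path_def by auto
    have "xs ! Suc k = hd P2 \<or> xs ! Suc k = last P2" using set_le2[OF Pne q k(3)] .
    then show ?thesis
    proof
      assume "xs ! Suc k = hd P2"
      then show ?thesis using longest_hd_closed[OF P2 yS] e k by auto
    next
      assume "xs ! Suc k = last P2"
      then show ?thesis using longest_last_closed[OF P2 yS] e k sym by auto
    qed
  next
    case nr: False
    define K where "K = {y \<in> S. reachable_in S E x y}"
    have xK: "x \<in> K" unfolding K_def reachable_in_def using x by (auto intro!: exI[of _ "[x]"])
    have fK: "finite K" unfolding K_def using finV by auto
    obtain Z where Z: "longest_path K E Z" using ex_longest[OF fK xK] by blast
    have ZK: "is_path K E Z" using Z by (simp add: longest_path_def)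
    have KS: "K \<subseteq> S" unfolding K_def by auto
    have ZS: "is_path S E Z" using is_path_mono[OF ZK KS] .
    have Zne: "Z \<noteq> []" using ZK by (simp add: is_path_def)
    have ext: "y \<in> K" if "z \<in> K" "y \<in> S" "E z y" for z y
    proof -
      have "reachable_in S E x z" using that(1) unfolding K_def by simp
      then have "(RS S E)\<^sup>*\<^sup>* x z" by (simp add: reachable_iff)
      moreover have "RS S E z y" using that KS unfolding RS_def by auto
      ultimately have "(RS S E)\<^sup>*\<^sup>* x y" by (rule rtranclp.rtrancl_into_rtrancl)
      then have "reachable_in S E x y" using x(1) by (simp add: reachable_iff)
      then show ?thesis using that(2) unfolding K_def by simp
    qed
    have "hd Z \<in> set Z" "last Z \<in> set Z" using Zne by auto
    then have hK: "hd Z \<in> K" "last Z \<in> K" using ZK unfolding is_path_def by blast+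
    have c1: "\<forall>y\<in>S. E (hd Z) y \<longrightarrow> y \<in> set Z"
    proof (intro ballI impI)
      fix y assume y: "y \<in> S" "E (hd Z) y"
      then have "y \<in> K" using ext[OF hK(1)] by blast
      then show "y \<in> set Z" using longest_hd_closed[OF Z] sym[OF y(2)] by blast
    qed
    have c2: "\<forall>y\<in>S. E (last Z) y \<longrightarrow> y \<in> set Z"
    proof (intro ballI impI)
      fix y assume y: "y \<in> S" "E (last Z) y"
      then have "y \<in> K" using ext[OF hK(2)] by blast
      then show "y \<in> set Z" using longest_last_closed[OF Z] y(2) by blast
    qed
    have nh: "z \<noteq> hd P2" if "z \<in> K" for z using that nr unfolding K_def by auto
    show ?thesis using COMP[OF ZS c1 c2] hK nh KS by blast
  qed
qed

end

theorem lemma2p4: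
  fixes V :: "'a set" and E :: "'a \<Rightarrow> 'a \<Rightarrow> bool" and P1 P2 :: "'a list"
  assumes "simple_graph V E"
    and "connected_graph V E"
    and "card V \<ge> 4"
    and "\<not> has_chorded_cycle V E"
    and "\<not> (\<exists>xs. hamiltonian_path V E xs)"
    and "longest_path V E P1" and "length P1 \<ge> 3"
    and "longest_path (V - set P1) E P2" and "length P2 \<ge> 1"
    and "deg_in E (set P1) (hd P2) \<le> deg_in E (set P1) (last P2)"
  shows "(length P2 \<le> 2 \<and> V = set P1 \<union> set P2)
      \<or> (length P2 \<ge> 3 \<and> deg_in E V (hd P2) = 1)
      \<or> (\<exists>w \<in> V - (set P1 \<union> {hd P2}). deg_in E V w \<le> 2 \<and> \<not> E (hd P1) w
            \<and> \<not> E (last P1) w \<and> \<not> cut_vertex V E w)"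
proof -
  interpret H V E P1 using assms(1,4,6) by unfold_locales auto
  have P2: "longest_path S E P2" using assms(8) .
  have third: "\<exists>w \<in> V - (set P1 \<union> {hd P2}). deg_in E V w \<le> 2 \<and> \<not> E (hd P1) w
            \<and> \<not> E (last P1) w \<and> \<not> cut_vertex V E w" if ex: "\<exists>w\<in>S - {hd P2}. good w"
  proof -
    obtain w where w: "w \<in> S - {hd P2}" "good w" using ex by blast
    then have "deg_in E V w \<le> 2 \<and> \<not> E (hd P1) w \<and> \<not> E (last P1) w \<and> \<not> cut_vertex V E w"
      using good_concl[OF assms(2)] by blast
    moreover have "w \<in> V - (set P1 \<union> {hd P2})" using w by auto
    ultimately show ?thesis by blast
  qed
  have degeq: "deg_in E (set P1) u = card (NB u)" for u by (simp add: deg_in_def NB_def)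
  show ?thesis
  proof (cases "length P2 \<le> 2")
    case True
    show ?thesis
    proof (cases "S = set P2")
      case True
      have "set P1 \<subseteq> V" using P1p by (simp add: is_path_def)
      then have "V = set P1 \<union> set P2" using True by blast
      then show ?thesis using \<open>length P2 \<le> 2\<close> by blast
    next
      case False
      then have "\<exists>w\<in>S - {hd P2}. good w" using case_le2[OF P2 \<open>length P2 \<le> 2\<close>] by blast
      then show ?thesis using third by blast
    qed
  next
    case False
    then have q: "length P2 \<ge> 3" by auto
    show ?thesis
    proof (cases "deg_in E V (hd P2) = 1")
      case True then show ?thesis using q by blast
    next
      case False
      have "card (NB (hd P2)) \<le> card (NB (last P2))" using assms(10) unfolding degeq .
      then have "\<exists>w\<in>S - {hd P2}. good w" using case_ge3[OF P2 q _ False] by blast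
      then show ?thesis using third by blast
    qed
  qed
qed

end
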